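(* Let $D$ be an infinite commutative unital integral domain. The images of the monomials in $B$ form a basis of the $D$-module $D\langle X\rangle/I$ (in particular $D\langle X\rangle/I$ is a free $D$-module).
   Context: Let $Y=\{y_1,y_2,\dots\}$ and $Z=\{z_1,z_2,\dots\}$ be disjoint countable sets of variables, $X=Y\cup Z$, and $D\langle X\rangle$ the free unital associative $D$-algebra on $X$, $\mathbb{Z}_2$-graded with the $y_i$ even and the $z_i$ odd. Let $L\langle X\rangle$ be the Lie subalgebra of $D\langle X\rangle$ (bracket $[a,b]=ab-ba$) generated by $X$, with induced grading $L\langle X\rangle^{(0)}\oplus L\langle X\rangle^{(1)}$. An ideal of weak graded identities is a two-sided ideal $J$ of $D\langle X\rangle$ closed under every algebra endomorphism of $D\langle X\rangle$ mapping each $y_i$ into $L\langle X\rangle^{(0)}$ and each $z_i$ into $L\langle X\rangle^{(1)}$; the ideal of weak graded identities generated by a set of polynomials is the smallest such ideal containing it. Let $I$ be the ideal of weak graded identities generated by $y_1y_2-y_2y_1$, $z_1z_2z_3-z_3z_2z_1$ and $y_1z_1+z_1y_1$. Let $B$ be the set of monomials of the forms $y_{a_1}\cdots y_{a_k}$ ($k\ge0$, $a_1\le\dots\le a_k$; $k=0$ gives $1$) and $y_{a_1}\cdots y_{a_k}z_{c_1}z_{d_1}z_{c_2}z_{d_2}\cdots z_{c_m}z_{d_m}$ or $y_{a_1}\cdots y_{a_k}z_{c_1}z_{d_1}\cdots z_{d_{m-1}}z_{c_m}$ (the last odd variable $z_{d_m}$ may be omitted), where $k\ge0$, $m\ge1$,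 $a_1\le\dots\le a_k$, $c_1\le\dots\le c_m$, and the $d_j$ present are nondecreasing. *)

theory Defs
  imports Main
begin

text \<open>Variables: Y i are the even variables y_i, Z i the odd variables z_i.\<close>
datatype var = Y nat | Z nat

text \<open>Elements of the free unital associative algebra D<X> are represented as
  finitely supported coefficient functions on words (noncommutative monomials).\<close>

definition FA :: "(var list \<Rightarrow> 'd::comm_ring_1) set" where
  "FA = {f. finite {w. f w \<noteq> 0}}"

definition pzero :: "var list \<Rightarrow> 'd::comm_ring_1" where
  "pzero = (\<lambda>w. 0)"

definition padd :: "(var list \<Rightarrow> 'd::comm_ring_1) \<Rightarrow> (var list \<Rightarrow> 'd) \<Rightarrow> (var list \<Rightarrow> 'd)" where
  "padd f g = (\<lambda>w. f w + g w)"

definition psub :: "(var list \<Rightarrow> 'd::comm_ring_1) \<Rightarrow> (var list \<Rightarrow> 'd) \<Rightarrow> (var list \<Rightarrow> 'd)" where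
  "psub f g = (\<lambda>w. f w - g w)"

definition psmul :: "'d::comm_ring_1 \<Rightarrow> (var list \<Rightarrow> 'd) \<Rightarrow> (var list \<Rightarrow> 'd)" where
  "psmul c f = (\<lambda>w. c * f w)"

definition pmul :: "(var list \<Rightarrow> 'd::comm_ring_1) \<Rightarrow> (var list \<Rightarrow> 'd) \<Rightarrow> (var list \<Rightarrow> 'd)" where
  "pmul f g = (\<lambda>w. \<Sum>i\<le>length w. f (take i w) * g (drop i w))"

definition pmono :: "var list \<Rightarrow> var list \<Rightarrow> 'd::comm_ring_1" where
  "pmono u = (\<lambda>w. if w = u then 1 else 0)"

definition pvar :: "var \<Rightarrow> var list \<Rightarrow> 'd::comm_ring_1" where
  "pvar x = pmono [x]"

definition pone :: "var list \<Rightarrow> 'd::comm_ring_1" where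
  "pone = pmono []"

definition lie :: "(var list \<Rightarrow> 'd::comm_ring_1) \<Rightarrow> (var list \<Rightarrow> 'd) \<Rightarrow> (var list \<Rightarrow> 'd)" where
  "lie f g = psub (pmul f g) (pmul g f)"

inductive_set LieX :: "(var list \<Rightarrow> 'd::comm_ring_1) set" where
  gen: "pvar x \<in> LieX"
| add: "f \<in> LieX \<Longrightarrow> g \<in> LieX \<Longrightarrow> padd f g \<in> LieX"
| smul: "f \<in> LieX \<Longrightarrow> psmul c f \<in> LieX"
| bracket: "f \<in> LieX \<Longrightarrow> g \<in> LieX \<Longrightarrow> lie f g \<in> LieX"

definition isZ :: "var \<Rightarrow> bool" where
  "isZ x = (case x of Y _ \<Rightarrow> False | Z _ \<Rightarrow> True)"

definition zdeg :: "var list \<Rightarrow> nat" where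
  "zdeg w = length (filter isZ w) mod 2"

definition homog :: "nat \<Rightarrow> (var list \<Rightarrow> 'd::comm_ring_1) \<Rightarrow> bool" where
  "homog p f = (\<forall>w. f w \<noteq> 0 \<longrightarrow> zdeg w = p)"

definition LieX0 :: "(var list \<Rightarrow> 'd::comm_ring_1) set" where
  "LieX0 = {f \<in> LieX. homog 0 f}"

definition LieX1 :: "(var list \<Rightarrow> 'd::comm_ring_1) set" where
  "LieX1 = {f \<in> LieX. homog 1 f}"

definition eval_word :: "(var \<Rightarrow> var list \<Rightarrow> 'd::comm_ring_1) \<Rightarrow> var list \<Rightarrow> (var list \<Rightarrow> 'd)" where
  "eval_word \<sigma> w = foldr (\<lambda>x acc. pmul (\<sigma> x) acc) w pone"

definition psubst :: "(var \<Rightarrow> var list \<Rightarrow> 'd::comm_ring_1) \<Rightarrow> (var list \<Rightarrow> 'd) \<Rightarrow> (var list \<Rightarrow> 'd)" where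
  "psubst \<sigma> f = (\<lambda>u. \<Sum>w\<in>{w. f w \<noteq> 0}. f w * eval_word \<sigma> w u)"

definition admissible :: "(var \<Rightarrow> var list \<Rightarrow> 'd::comm_ring_1) \<Rightarrow> bool" where
  "admissible \<sigma> = (\<forall>i. \<sigma> (Y i) \<in> LieX0 \<and> \<sigma> (Z i) \<in> LieX1)"

definition wg_ideal :: "(var list \<Rightarrow> 'd::comm_ring_1) set \<Rightarrow> bool" where
  "wg_ideal J = (J \<subseteq> FA \<and> pzero \<in> J
     \<and> (\<forall>f\<in>J. \<forall>g\<in>J. padd f g \<in> J)
     \<and> (\<forall>c. \<forall>f\<in>J. psmul c f \<in> J)
     \<and> (\<forall>f\<in>FA. \<forall>g\<in>J. pmul f g \<in> J \<and> pmul g f \<in> J)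
     \<and> (\<forall>\<sigma>. admissible \<sigma> \<longrightarrow> (\<forall>f\<in>J. psubst \<sigma> f \<in> J)))"

definition wg_generated :: "(var list \<Rightarrow> 'd::comm_ring_1) set \<Rightarrow> (var list \<Rightarrow> 'd) set" where
  "wg_generated S = \<Inter>{J. wg_ideal J \<and> S \<subseteq> J}"

definition Iid :: "(var list \<Rightarrow> 'd::comm_ring_1) set" where
  "Iid = wg_generated
     { psub (pmul (pvar (Y 1)) (pvar (Y 2))) (pmul (pvar (Y 2)) (pvar (Y 1))),
       psub (pmul (pmul (pvar (Z 1)) (pvar (Z 2))) (pvar (Z 3)))
            (pmul (pmul (pvar (Z 3)) (pvar (Z 2))) (pvar (Z 1))),
       padd (pmul (pvar (Y 1)) (pvar (Z 1))) (pmul (pvar (Z 1)) (pvar (Y 1))) }"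

text \<open>The set B of monomials: y_{a_1}...y_{a_k} z_{c_1} z_{d_1} z_{c_2} z_{d_2} ...,
  a's sorted, c's (even positions of the z-part) sorted, d's (odd positions) sorted.\<close>
definition Bmon :: "var list set" where
  "Bmon = {map Y as @ map Z zs | as zs. sorted as
             \<and> sorted (nths zs {i. even i}) \<and> sorted (nths zs {i. odd i})}"

end

theory Submission
  imports Defs "HOL-Library.Poly_Mapping" "HOL-Library.Multiset"
begin


definition supp :: "(var list \<Rightarrow> 'd::comm_ring_1) \<Rightarrow> var list set" where
  "supp f = {w. f w \<noteq> 0}"

definition fsum :: "'a set \<Rightarrow> ('a \<Rightarrow> var list \<Rightarrow> 'd::comm_ring_1) \<Rightarrow> var list \<Rightarrow> 'd" where
  "fsum A F = (\<lambda>w. \<Sum>a\<in>A. F a w)"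

lemma FA_iff: "f \<in> FA \<longleftrightarrow> finite (supp f)"
  by (simp add: FA_def supp_def)

lemma fsum_empty[simp]: "fsum {} F = pzero"
  by (simp add: fsum_def pzero_def)

lemma fsum_insert: "finite A \<Longrightarrow> a \<notin> A \<Longrightarrow> fsum (insert a A) F = padd (F a) (fsum A F)"
  by (simp add: fsum_def padd_def)

lemma pzero_FA[simp]: "pzero \<in> FA"
  by (simp add: FA_def pzero_def)

lemma padd_FA[simp]: "f \<in> FA \<Longrightarrow> g \<in> FA \<Longrightarrow> padd f g \<in> FA"
proof -
  assume a: "f \<in> FA" "g \<in> FA"
  have "{w. padd f g w \<noteq> 0} \<subseteq> {w. f w \<noteq> 0} \<union> {w. g w \<noteq> 0}"
    by (auto simp: padd_def)
  then show ?thesis using a unfolding FA_def by (auto intro: finite_subset)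
qed

lemma psub_FA[simp]: "f \<in> FA \<Longrightarrow> g \<in> FA \<Longrightarrow> psub f g \<in> FA"
proof -
  assume a: "f \<in> FA" "g \<in> FA"
  have "{w. psub f g w \<noteq> 0} \<subseteq> {w. f w \<noteq> 0} \<union> {w. g w \<noteq> 0}"
    by (auto simp: psub_def)
  then show ?thesis using a unfolding FA_def by (auto intro: finite_subset)
qed

lemma psmul_FA[simp]: "f \<in> FA \<Longrightarrow> psmul c f \<in> FA"
proof -
  assume a: "f \<in> FA"
  have "{w. psmul c f w \<noteq> 0} \<subseteq> {w. f w \<noteq> 0}"
    by (auto simp: psmul_def)
  then show ?thesis using a unfolding FA_def by (auto intro: finite_subset)
qed

lemma pmono_FA[simp]: "pmono u \<in> FA"
proof -
  have "{w. (pmono u :: var list \<Rightarrow> 'a::comm_ring_1) w \<noteq> 0} \<subseteq> {u}"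
    by (auto simp: pmono_def)
  then show ?thesis unfolding FA_def by (auto intro: finite_subset)
qed

lemma fsum_FA[simp]: "finite A \<Longrightarrow> (\<And>a. a \<in> A \<Longrightarrow> F a \<in> FA) \<Longrightarrow> fsum A F \<in> FA"
  by (induction A rule: finite_induct) (auto simp: fsum_insert)

lemma rep_gen: "finite A \<Longrightarrow> supp f \<subseteq> A \<Longrightarrow> f = fsum A (\<lambda>u. psmul (f u) (pmono u))"
proof
  fix w assume A: "finite A" "supp f \<subseteq> A"
  have "fsum A (\<lambda>u. psmul (f u) (pmono u)) w = (\<Sum>u\<in>A. if u = w then f u else 0)"
    unfolding fsum_def psmul_def pmono_def by (intro sum.cong) auto
  also have "\<dots> = f w" using A by (auto simp: supp_def)
  finally show "f w = fsum A (\<lambda>u. psmul (f u) (pmono u)) w" by simp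
qed

lemma rep: "f \<in> FA \<Longrightarrow> f = fsum (supp f) (\<lambda>u. psmul (f u) (pmono u))"
  by (rule rep_gen) (auto simp: FA_iff)

lemma pmul_fsum_left: "pmul (fsum A F) g = fsum A (\<lambda>a. pmul (F a) g)"
  unfolding pmul_def fsum_def
  by (auto simp: sum_distrib_right intro: sum.swap)

lemma pmul_fsum_right: "pmul g (fsum A F) = fsum A (\<lambda>a. pmul g (F a))"
  unfolding pmul_def fsum_def
  by (auto simp: sum_distrib_left intro: sum.swap)

lemma pmul_psmul_left[simp]: "pmul (psmul c f) g = psmul c (pmul f g)"
  unfolding pmul_def psmul_def by (auto simp: sum_distrib_left mult.assoc)

lemma pmul_psmul_right[simp]: "pmul f (psmul c g) = psmul c (pmul f g)"
  unfolding pmul_def psmul_def by (auto simp: sum_distrib_left mult_ac)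

lemma psmul_psmul[simp]: "psmul c (psmul d f) = psmul (c * d) f"
  unfolding psmul_def by (auto simp: mult.assoc)

lemma pmul_pmono[simp]: "pmul (pmono u) (pmono v) = pmono (u @ v)"
proof
  fix w :: "var list"
  show "pmul (pmono u) (pmono v) w = (pmono (u @ v) :: var list \<Rightarrow> 'a) w"
  proof (cases "w = u @ v")
    case True
    have "pmul (pmono u) (pmono v) w = (\<Sum>i\<le>length w. if i = length u then 1 else (0::'a))"
      unfolding pmul_def pmono_def
    proof (intro sum.cong refl)
      fix i assume i: "i \<in> {..length w}"
      have "(take i w = u \<and> drop i w = v) \<longleftrightarrow> i = length u"
      proof
        assume "take i w = u \<and> drop i w = v"
        then have "length (take i w) = length u" by simp
        then show "i = length u" using i by simp
      qed (simp add: True)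
      then show "(if take i w = u then 1 else 0) * (if drop i w = v then 1 else 0) = (if i = length u then 1 else (0::'a))"
        by auto
    qed
    also have "\<dots> = 1" using True by simp
    finally show ?thesis using True by (simp add: pmono_def)
  next
    case False
    have "pmul (pmono u) (pmono v) w = (\<Sum>i\<le>length w. (0::'a))"
      unfolding pmul_def pmono_def
    proof (intro sum.cong refl)
      fix i assume "i \<in> {..length w}"
      show "(if take i w = u then 1 else 0) * (if drop i w = v then 1 else 0) = (0::'a)"
        using False by (metis (full_types) append_take_drop_id mult_not_zero)
    qed
    then show ?thesis using False by (simp add: pmono_def)
  qed
qed

lemma fsum_swap: "fsum A (\<lambda>a. fsum B (F a)) = fsum B (\<lambda>b. fsum A (\<lambda>a. F a b))"
  unfolding fsum_def by (auto intro: sum.swap)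

lemma pmul_rep: "f \<in> FA \<Longrightarrow> g \<in> FA \<Longrightarrow>
   pmul f g = fsum (supp f) (\<lambda>u. fsum (supp g) (\<lambda>v. psmul (f u * g v) (pmono (u @ v))))"
proof -
  assume a: "f \<in> FA" "g \<in> FA"
  have "pmul f g = pmul (fsum (supp f) (\<lambda>u. psmul (f u) (pmono u))) (fsum (supp g) (\<lambda>u. psmul (g u) (pmono u)))"
    using rep[OF a(1)] rep[OF a(2)] by simp
  also have "\<dots> = fsum (supp f) (\<lambda>u. fsum (supp g) (\<lambda>v. psmul (f u * g v) (pmono (u @ v))))"
    unfolding pmul_fsum_left pmul_fsum_right by (subst fsum_swap) (simp add: mult.commute)
  finally show ?thesis .
qed

lemma pmul_FA[simp]: "f \<in> FA \<Longrightarrow> g \<in> FA \<Longrightarrow> pmul f g \<in> FA"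
proof -
  assume a: "f \<in> FA" "g \<in> FA"
  then have "finite (supp f)" "finite (supp g)" by (auto simp: FA_iff)
  then show ?thesis by (subst pmul_rep[OF a]) (auto intro!: fsum_FA)
qed

lemma pvar_pmono: "pvar x = pmono [x]" by (simp add: pvar_def)
lemma pone_pmono: "pone = pmono []" by (simp add: pone_def)

lemma pvar_FA[simp]: "pvar x \<in> FA" by (simp add: pvar_def)
lemma pone_FA[simp]: "pone \<in> FA" by (simp add: pone_def)




lemma pmul_psub_right: "pmul f (psub g h) = psub (pmul f g) (pmul f h)"
  unfolding pmul_def psub_def by (auto simp: sum_subtractf right_diff_distrib)

lemma pmul_psub_left: "pmul (psub g h) f = psub (pmul g f) (pmul h f)"
  unfolding pmul_def psub_def by (auto simp: sum_subtractf left_diff_distrib)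

lemma psubst_gen: "finite A \<Longrightarrow> supp f \<subseteq> A \<Longrightarrow> psubst \<sigma> f = fsum A (\<lambda>w. psmul (f w) (eval_word \<sigma> w))"
  unfolding psubst_def fsum_def psmul_def supp_def
  by (auto intro!: sum.mono_neutral_left)

lemma eval_word_ren: "eval_word (\<lambda>x. pvar (s x)) w = pmono (map s w)"
  by (induction w) (auto simp: eval_word_def pone_pmono pvar_pmono)

lemma pmul_pvar2: "pmul (pvar a) (pvar b) = pmono [a, b]"
  by (simp add: pvar_pmono)
lemma pmul_pvar3: "pmul (pmul (pvar a) (pvar b)) (pvar c) = pmono [a, b, c]"
  by (simp add: pvar_pmono)

lemma psubst_psub2: "a \<noteq> b \<Longrightarrow> psubst \<sigma> (psub (pmono a) (pmono b)) = psub (eval_word \<sigma> a) (eval_word \<sigma> b)"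
proof -
  assume ab: "a \<noteq> b"
  have "supp (psub (pmono a) (pmono b) :: var list \<Rightarrow> 'a) \<subseteq> {a, b}"
    by (auto simp: supp_def psub_def pmono_def)
  then have "psubst \<sigma> (psub (pmono a) (pmono b)) = fsum {a, b} (\<lambda>w. psmul (psub (pmono a) (pmono b) w) (eval_word \<sigma> w))"
    by (intro psubst_gen) auto
  also have "\<dots> = psub (eval_word \<sigma> a) (eval_word \<sigma> b)"
    using ab by (auto simp: fsum_def psub_def psmul_def pmono_def)
  finally show ?thesis .
qed

lemma psubst_padd2: "a \<noteq> b \<Longrightarrow> psubst \<sigma> (padd (pmono a) (pmono b)) = padd (eval_word \<sigma> a) (eval_word \<sigma> b)"
proof -
  assume ab: "a \<noteq> b"
  have "supp (padd (pmono a) (pmono b) :: var list \<Rightarrow> 'a) \<subseteq> {a, b}"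
    by (auto simp: supp_def padd_def pmono_def)
  then have "psubst \<sigma> (padd (pmono a) (pmono b)) = fsum {a, b} (\<lambda>w. psmul (padd (pmono a) (pmono b) w) (eval_word \<sigma> w))"
    by (intro psubst_gen) auto
  also have "\<dots> = padd (eval_word \<sigma> a) (eval_word \<sigma> b)"
    using ab by (auto simp: fsum_def padd_def psmul_def pmono_def)
  finally show ?thesis .
qed

lemma pvarY_L0: "pvar (Y k) \<in> LieX0"
  using LieX.gen[of "Y k"] unfolding LieX0_def homog_def
  by (auto simp: pvar_def pmono_def zdeg_def isZ_def split: if_splits)

lemma pvarZ_L1: "pvar (Z k) \<in> LieX1"
  using LieX.gen[of "Z k"] unfolding LieX1_def homog_def
  by (auto simp: pvar_def pmono_def zdeg_def isZ_def split: if_splits)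

lemma adm_ren: "(\<And>k. \<exists>l. s (Y k) = Y l) \<Longrightarrow> (\<And>k. \<exists>l. s (Z k) = Z l) \<Longrightarrow> admissible (\<lambda>x. pvar (s x))"
  unfolding admissible_def by (metis pvarY_L0 pvarZ_L1)

definition gen1 :: "var list \<Rightarrow> 'd::comm_ring_1" where
  "gen1 = psub (pmul (pvar (Y 1)) (pvar (Y 2))) (pmul (pvar (Y 2)) (pvar (Y 1)))"
definition gen2 :: "var list \<Rightarrow> 'd::comm_ring_1" where
  "gen2 = psub (pmul (pmul (pvar (Z 1)) (pvar (Z 2))) (pvar (Z 3)))
            (pmul (pmul (pvar (Z 3)) (pvar (Z 2))) (pvar (Z 1)))"
definition gen3 :: "var list \<Rightarrow> 'd::comm_ring_1" where
  "gen3 = padd (pmul (pvar (Y 1)) (pvar (Z 1))) (pmul (pvar (Z 1)) (pvar (Y 1)))"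

lemma Iid_gens: "Iid = wg_generated {gen1, gen2, gen3}"
  by (simp add: Iid_def gen1_def gen2_def gen3_def)

locale wgJ =
  fixes J :: "(var list \<Rightarrow> 'd::comm_ring_1) set"
  assumes wg: "wg_ideal J" and g1: "gen1 \<in> J" and g2: "gen2 \<in> J" and g3: "gen3 \<in> J"
begin

lemma J_FA: "f \<in> J \<Longrightarrow> f \<in> FA" using wg by (auto simp: wg_ideal_def)
lemma J_zero: "pzero \<in> J" using wg by (auto simp: wg_ideal_def)
lemma J_add: "f \<in> J \<Longrightarrow> g \<in> J \<Longrightarrow> padd f g \<in> J" using wg by (auto simp: wg_ideal_def)
lemma J_smul: "f \<in> J \<Longrightarrow> psmul c f \<in> J" using wg by (auto simp: wg_ideal_def)
lemma J_mull: "f \<in> FA \<Longrightarrow> g \<in> J \<Longrightarrow> pmul f g \<in> J" using wg by (auto simp: wg_ideal_def)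
lemma J_mulr: "f \<in> FA \<Longrightarrow> g \<in> J \<Longrightarrow> pmul g f \<in> J" using wg by (auto simp: wg_ideal_def)
lemma J_subst: "admissible \<sigma> \<Longrightarrow> f \<in> J \<Longrightarrow> psubst \<sigma> f \<in> J" using wg by (auto simp: wg_ideal_def)

lemma J_fsum: "finite A \<Longrightarrow> (\<And>a. a \<in> A \<Longrightarrow> F a \<in> J) \<Longrightarrow> fsum A F \<in> J"
  by (induction A rule: finite_induct) (auto simp: fsum_insert J_zero J_add)

definition rel :: "var list \<Rightarrow> 'd \<Rightarrow> var list \<Rightarrow> bool" where
  "rel u s v \<longleftrightarrow> psub (pmono u) (psmul s (pmono v)) \<in> J"

lemma rel_refl: "rel u 1 u"
proof -
  have "psub (pmono u) (psmul 1 (pmono u)) = (pzero :: var list \<Rightarrow> 'd)"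
    by (auto simp: psub_def psmul_def pzero_def)
  then show ?thesis using J_zero by (simp add: rel_def)
qed

lemma rel_trans: "rel u s v \<Longrightarrow> rel v t w \<Longrightarrow> rel u (s * t) w"
proof -
  assume a: "rel u s v" "rel v t w"
  have "(psub (pmono u) (psmul (s * t) (pmono w)) :: var list \<Rightarrow> 'd) =
     padd (psub (pmono u) (psmul s (pmono v))) (psmul s (psub (pmono v) (psmul t (pmono w))))"
    by (auto simp: psub_def padd_def psmul_def algebra_simps)
  then show ?thesis using a J_add J_smul by (simp add: rel_def)
qed

lemma rel_sym: "rel u s v \<Longrightarrow> s * s = 1 \<Longrightarrow> rel v s u"
proof -
  assume a: "rel u s v" "s * s = 1"
  have "(psub (pmono v) (psmul s (pmono u)) :: var list \<Rightarrow> 'd) =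
     psmul (- s) (psub (pmono u) (psmul s (pmono v)))"
    using a(2) by (auto simp: psub_def psmul_def right_diff_distrib mult.assoc[symmetric])
  then show ?thesis using a J_smul by (simp add: rel_def)
qed

lemma rel_ctx: "rel v s v' \<Longrightarrow> rel (u @ v @ w) s (u @ v' @ w)"
proof -
  assume a: "rel v s v'"
  have "(psub (pmono (u @ v @ w)) (psmul s (pmono (u @ v' @ w))) :: var list \<Rightarrow> 'd) =
    pmul (pmono u) (pmul (psub (pmono v) (psmul s (pmono v'))) (pmono w))"
    by (simp add: pmul_psub_left pmul_psub_right)
  then show ?thesis using a J_mull J_mulr J_FA by (simp add: rel_def)
qed

lemma rel_cong: "rel v s v' \<Longrightarrow> x = u @ v @ w \<Longrightarrow> y = u @ v' @ w \<Longrightarrow> rel x s y"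
  using rel_ctx by blast

lemma R1: "rel [Y i, Y j] 1 [Y j, Y i]"
proof -
  define s where "s = (\<lambda>x. if x = Y 1 then Y i else if x = Y 2 then Y j else x)"
  have adm: "admissible (\<lambda>x. pvar (s x) :: var list \<Rightarrow> 'd)"
    by (rule adm_ren) (auto simp: s_def)
  have "psubst (\<lambda>x. pvar (s x)) (gen1 :: var list \<Rightarrow> 'd) = psub (pmono [Y i, Y j]) (pmono [Y j, Y i])"
    unfolding gen1_def pmul_pvar2 by (subst psubst_psub2) (auto simp: eval_word_ren s_def)
  moreover have "psub (pmono [Y i, Y j]) (pmono [Y j, Y i]) = psub (pmono [Y i, Y j]) (psmul 1 (pmono [Y j, Y i]) :: var list \<Rightarrow> 'd)"
    by (auto simp: psmul_def)
  ultimately show ?thesis using J_subst[OF adm g1] by (simp add: rel_def)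
qed

lemma R2: "rel [Z a, Z b, Z c] 1 [Z c, Z b, Z a]"
proof -
  define s where "s = (\<lambda>x. if x = Z 1 then Z a else if x = Z 2 then Z b else if x = Z 3 then Z c else x)"
  have adm: "admissible (\<lambda>x. pvar (s x) :: var list \<Rightarrow> 'd)"
    by (rule adm_ren) (auto simp: s_def)
  have "psubst (\<lambda>x. pvar (s x)) (gen2 :: var list \<Rightarrow> 'd) = psub (pmono [Z a, Z b, Z c]) (pmono [Z c, Z b, Z a])"
    unfolding gen2_def pmul_pvar3 by (subst psubst_psub2) (auto simp: eval_word_ren s_def)
  moreover have "psub (pmono [Z a, Z b, Z c]) (pmono [Z c, Z b, Z a]) = psub (pmono [Z a, Z b, Z c]) (psmul 1 (pmono [Z c, Z b, Z a]) :: var list \<Rightarrow> 'd)"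
    by (auto simp: psmul_def)
  ultimately show ?thesis using J_subst[OF adm g2] by (simp add: rel_def)
qed

lemma R3: "rel [Z a, Y i] (-1) [Y i, Z a]"
proof -
  define s where "s = (\<lambda>x. if x = Y 1 then Y i else if x = Z 1 then Z a else x)"
  have adm: "admissible (\<lambda>x. pvar (s x) :: var list \<Rightarrow> 'd)"
    by (rule adm_ren) (auto simp: s_def)
  have "psubst (\<lambda>x. pvar (s x)) (gen3 :: var list \<Rightarrow> 'd) = padd (pmono [Y i, Z a]) (pmono [Z a, Y i])"
    unfolding gen3_def pmul_pvar2 by (subst psubst_padd2) (auto simp: eval_word_ren s_def)
  moreover have "padd (pmono [Y i, Z a]) (pmono [Z a, Y i]) = psub (pmono [Z a, Y i]) (psmul (-1) (pmono [Y i, Z a]) :: var list \<Rightarrow> 'd)"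
    by (auto simp: psmul_def padd_def psub_def)
  ultimately show ?thesis using J_subst[OF adm g3] by (simp add: rel_def)
qed

end



function il :: "'a list \<Rightarrow> 'a list \<Rightarrow> 'a list" where
  "il [] q = q"
| "il (x # p) q = x # il q p"
  by pat_completeness auto
termination by (relation "measure (\<lambda>(p, q). length p + length q)") auto

fun evl :: "'a list \<Rightarrow> 'a list" and odl :: "'a list \<Rightarrow> 'a list" where
  "evl [] = []"
| "evl (x # xs) = x # odl xs"
| "odl [] = []"
| "odl (x # xs) = evl xs"

lemma il_evod: "il (evl xs) (odl xs) = xs"
  by (induction xs) auto

lemma len_evod: "length (evl xs) = (length xs + 1) div 2 \<and> length (odl xs) = length xs div 2"
  by (induction xs) auto

lemma nths_il: "length q \<le> length p \<Longrightarrow> length p \<le> length q + 1 \<Longrightarrow>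
   nths (il p q) {i. even i} = p \<and> nths (il p q) {i. odd i} = q"
proof (induction "length p + length q" arbitrary: p q rule: less_induct)
  case less
  show ?case
  proof (cases p)
    case Nil
    then show ?thesis using less by auto
  next
    case (Cons a p')
    have IH: "nths (il q p') {i. even i} = q \<and> nths (il q p') {i. odd i} = p'"
      using less Cons by (intro less.hyps) auto
    have e1: "{j. Suc j \<in> {i::nat. even i}} = {i. odd i}" by auto
    have e2: "{j. Suc j \<in> {i::nat. odd i}} = {i. even i}" by auto
    show ?thesis using IH Cons by (simp add: nths_Cons e1 e2)
  qed
qed

context wgJ
begin

lemma zy: "\<exists>t. rel (Z a # map Y as) t (map Y as @ [Z a])"
proof (induction as)
  case Nil
  then show ?case using rel_refl by auto
next
  case (Cons i as)
  then obtain t where t: "rel (Z a # map Y as) t (map Y as @ [Z a])" by blast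
  have 1: "rel (Z a # Y i # map Y as) (-1) (Y i # Z a # map Y as)"
    using rel_cong[OF R3, where u="[]" and w="map Y as"] by simp
  have 2: "rel (Y i # Z a # map Y as) t (Y i # map Y as @ [Z a])"
    using rel_cong[OF t, where u="[Y i]" and w="[]"] by simp
  show ?case using rel_trans[OF 1 2] by auto
qed

lemma step1: "\<exists>t as zs. rel w t (map Y as @ map Z zs)"
proof (induction w)
  case Nil
  then show ?case using rel_refl by (metis append_Nil list.map(1))
next
  case (Cons x w)
  then obtain t as zs where t: "rel w t (map Y as @ map Z zs)" by blast
  have 1: "rel (x # w) t (x # map Y as @ map Z zs)"
    using rel_cong[OF t, where u="[x]" and w="[]"] by simp
  show ?case
  proof (cases x)
    case (Y i)
    then show ?thesis using 1 by (metis append_Cons list.map(2))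
  next
    case (Z a)
    obtain t' where t': "rel (Z a # map Y as) t' (map Y as @ [Z a])" using zy by blast
    have 2: "rel (Z a # map Y as @ map Z zs) t' (map Y as @ map Z (a # zs))"
      using rel_cong[OF t', where u="[]" and w="map Z zs"] by simp
    show ?thesis using rel_trans[OF 1[unfolded \<open>x = Z a\<close>] 2] \<open>x = Z a\<close> by blast
  qed
qed

lemma ins_Y: "rel (map Y (a # l)) 1 (map Y (insort a l))"
proof (induction l)
  case Nil
  then show ?case using rel_refl by simp
next
  case (Cons b l)
  show ?case
  proof (cases "a \<le> b")
    case True
    then show ?thesis using rel_refl by simp
  next
    case False
    have 1: "rel (Y a # Y b # map Y l) 1 (Y b # Y a # map Y l)"
      using rel_cong[OF R1, where u="[]" and w="map Y l"] by simp
    have 2: "rel (Y b # Y a # map Y l) 1 (Y b # map Y (insort a l))"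
      using rel_cong[OF Cons, where u="[Y b]" and w="[]"] by simp
    show ?thesis using rel_trans[OF 1 2] False by simp
  qed
qed

lemma sort_Y: "rel (map Y l) 1 (map Y (sort l))"
proof (induction l)
  case Nil
  then show ?case using rel_refl by simp
next
  case (Cons a l)
  have 1: "rel (Y a # map Y l) 1 (Y a # map Y (sort l))"
    using rel_cong[OF Cons, where u="[Y a]" and w="[]"] by simp
  have 2: "rel (map Y (a # sort l)) 1 (map Y (insort a (sort l)))" by (rule ins_Y)
  show ?case using rel_trans[OF 1 2[simplified]] by simp
qed

lemma L1: "length p \<le> length q \<Longrightarrow> rel (map Z (il (a # p) q)) 1 (map Z (il (insort a p) q))"
proof (induction p arbitrary: a q)
  case Nil
  then show ?case using rel_refl by simp
next
  case (Cons b p)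
  then obtain e q' where q: "q = e # q'" by (cases q) auto
  show ?case
  proof (cases "a \<le> b")
    case True
    then show ?thesis using rel_refl by simp
  next
    case False
    have 1: "rel (Z a # Z e # Z b # map Z (il q' p)) 1 (Z b # Z e # Z a # map Z (il q' p))"
      using rel_cong[OF R2, where u="[]" and w="map Z (il q' p)"] by simp
    have IH: "rel (map Z (il (a # p) q')) 1 (map Z (il (insort a p) q'))"
      using Cons q by (intro Cons.IH) auto
    have 2: "rel (Z b # Z e # map Z (il (a # p) q')) 1 (Z b # Z e # map Z (il (insort a p) q'))"
      using rel_cong[OF IH, where u="[Z b, Z e]" and w="[]"] by simp
    show ?thesis using rel_trans[OF 1 2[simplified]] False q by simp
  qed
qed

lemma L2: "length q \<le> length p \<Longrightarrow> length p \<le> length q + 1 \<Longrightarrow>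
   rel (map Z (il p q)) 1 (map Z (il (sort p) (sort q)))"
proof (induction "length p + length q" arbitrary: p q rule: less_induct)
  case less
  show ?case
  proof (cases p)
    case Nil
    then show ?thesis using less rel_refl by auto
  next
    case (Cons a p')
    have IH: "rel (map Z (il q p')) 1 (map Z (il (sort q) (sort p')))"
      using less Cons by (intro less.hyps) auto
    have 1: "rel (Z a # map Z (il q p')) 1 (Z a # map Z (il (sort q) (sort p')))"
      using rel_cong[OF IH, where u="[Z a]" and w="[]"] by simp
    have 2: "rel (map Z (il (a # sort p') (sort q))) 1 (map Z (il (insort a (sort p')) (sort q)))"
      using less Cons by (intro L1) auto
    show ?thesis using rel_trans[OF 1 2[simplified]] Cons by simp
  qed
qed

lemma nf: "\<exists>t b. b \<in> Bmon \<and> rel w t b"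
proof -
  obtain t as zs where t: "rel w t (map Y as @ map Z zs)" using step1 by blast
  have 1: "rel (map Y as @ map Z zs) 1 (map Y (sort as) @ map Z zs)"
    using rel_cong[OF sort_Y, where u="[]" and w="map Z zs"] by simp
  define zs' where "zs' = il (sort (evl zs)) (sort (odl zs))"
  have 2: "rel (map Z zs) 1 (map Z zs')"
    using L2[of "odl zs" "evl zs"] len_evod[of zs] unfolding zs'_def il_evod by auto
  have 3: "rel (map Y (sort as) @ map Z zs) 1 (map Y (sort as) @ map Z zs')"
    using rel_cong[OF 2, where u="map Y (sort as)" and w="[]"] by simp
  have "nths zs' {i. even i} = sort (evl zs) \<and> nths zs' {i. odd i} = sort (odl zs)"
    unfolding zs'_def using len_evod[of zs] by (intro nths_il) auto
  then have "map Y (sort as) @ map Z zs' \<in> Bmon"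
    unfolding Bmon_def mem_Collect_eq by (intro exI[of _ "sort as"] exI[of _ zs']) auto
  then show ?thesis using rel_trans[OF rel_trans[OF t 1] 3] by blast
qed

lemma span: "f \<in> FA \<Longrightarrow> \<exists>S c. finite S \<and> S \<subseteq> Bmon \<and> psub f (\<lambda>w. \<Sum>b\<in>S. c b * pmono b w) \<in> J"
proof -
  assume fA: "f \<in> FA"
  obtain T Bf where TB: "\<And>w. Bf w \<in> Bmon \<and> rel w (T w) (Bf w)"
    using nf by metis
  define A where "A = supp f"
  have finA: "finite A" using fA by (simp add: A_def FA_iff)
  define c where "c b = (\<Sum>w\<in>{w \<in> A. Bf w = b}. f w * T w)" for b
  have eq: "psub f (\<lambda>u. \<Sum>b\<in>Bf ` A. c b * pmono b u) =
      fsum A (\<lambda>w. psmul (f w) (psub (pmono w) (psmul (T w) (pmono (Bf w)))))"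
  proof
    fix u
    have r: "f u = (\<Sum>w\<in>A. f w * pmono w u)"
      using fun_cong[OF rep[OF fA], of u] by (simp add: A_def fsum_def psmul_def)
    have s: "(\<Sum>b\<in>Bf ` A. c b * pmono b u) = (\<Sum>w\<in>A. f w * T w * pmono (Bf w) u)"
    proof -
      have "(\<Sum>w\<in>A. f w * T w * pmono (Bf w) u) =
         (\<Sum>b\<in>Bf ` A. \<Sum>w\<in>{w \<in> A. Bf w = b}. f w * T w * pmono (Bf w) u)"
        by (rule sum.image_gen[OF finA])
      also have "\<dots> = (\<Sum>b\<in>Bf ` A. c b * pmono b u)"
        unfolding c_def sum_distrib_right by (intro sum.cong refl) auto
      finally show ?thesis by simp
    qed
    show "psub f (\<lambda>u. \<Sum>b\<in>Bf ` A. c b * pmono b u) u =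
      fsum A (\<lambda>w. psmul (f w) (psub (pmono w) (psmul (T w) (pmono (Bf w))))) u"
      unfolding psub_def fsum_def psmul_def r s
      by (simp add: right_diff_distrib sum_subtractf mult.assoc)
  qed
  have "fsum A (\<lambda>w. psmul (f w) (psub (pmono w) (psmul (T w) (pmono (Bf w))))) \<in> J"
    using TB finA by (intro J_fsum J_smul) (auto simp: rel_def)
  then show ?thesis using eq finA TB by (intro exI[of _ "Bf ` A"] exI[of _ c]) auto
qed

end



datatype 'r m2 = M (e11: 'r) (e12: 'r) (e21: 'r) (e22: 'r)

lemma m2_eqI: "e11 A = e11 B \<Longrightarrow> e12 A = e12 B \<Longrightarrow> e21 A = e21 B \<Longrightarrow> e22 A = e22 B \<Longrightarrow> A = B"
  by (cases A; cases B) auto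

instantiation m2 :: (comm_ring_1) ring_1
begin
definition "0 = M 0 0 0 0"
definition "1 = M 1 0 0 1"
definition "A + B = M (e11 A + e11 B) (e12 A + e12 B) (e21 A + e21 B) (e22 A + e22 B)"
definition "A - B = M (e11 A - e11 B) (e12 A - e12 B) (e21 A - e21 B) (e22 A - e22 B)"
definition "- A = M (- e11 A) (- e12 A) (- e21 A) (- e22 A)"
definition "A * B = M (e11 A * e11 B + e12 A * e21 B) (e11 A * e12 B + e12 A * e22 B)
                      (e21 A * e11 B + e22 A * e21 B) (e21 A * e12 B + e22 A * e22 B)"
instance
  by intro_classes
    (auto intro!: m2_eqI simp: zero_m2_def one_m2_def plus_m2_def minus_m2_def uminus_m2_def
      times_m2_def algebra_simps)
end

lemma m2_sel_simps[simp]: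
  "e11 (0::'r::comm_ring_1 m2) = 0" "e12 (0::'r m2) = 0" "e21 (0::'r m2) = 0" "e22 (0::'r m2) = 0"
  "e11 (1::'r m2) = 1" "e12 (1::'r m2) = 0" "e21 (1::'r m2) = 0" "e22 (1::'r m2) = 1"
  "e11 (A + B) = e11 A + e11 B" "e12 (A + B) = e12 A + e12 B" "e21 (A + B) = e21 A + e21 B" "e22 (A + B) = e22 A + e22 B"
  "e11 (A - B) = e11 A - e11 B" "e12 (A - B) = e12 A - e12 B" "e21 (A - B) = e21 A - e21 B" "e22 (A - B) = e22 A - e22 B"
  "e11 (A * B) = e11 A * e11 B + e12 A * e21 B" "e12 (A * B) = e11 A * e12 B + e12 A * e22 B"
  "e21 (A * B) = e21 A * e11 B + e22 A * e21 B" "e22 (A * B) = e21 A * e12 B + e22 A * e22 B"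
  by (simp_all add: zero_m2_def one_m2_def plus_m2_def minus_m2_def times_m2_def)

lemma m2_sum_sel:
  "e11 (sum F S) = (\<Sum>x\<in>S. e11 (F x))" "e12 (sum F S) = (\<Sum>x\<in>S. e12 (F x))"
  "e21 (sum F S) = (\<Sum>x\<in>S. e21 (F x))" "e22 (sum F S) = (\<Sum>x\<in>S. e22 (F x))"
  for F :: "'a \<Rightarrow> 'r::comm_ring_1 m2"
  by (induction S rule: infinite_finite_induct; simp)+

type_synonym 'd R = "(nat \<times> nat) multiset \<Rightarrow>\<^sub>0 'd"

definition emb :: "'d::comm_ring_1 \<Rightarrow> 'd R" where
  "emb c = Poly_Mapping.single {#} c"

definition E :: "'d::comm_ring_1 \<Rightarrow> 'd R m2" where
  "E c = M (emb c) 0 0 (emb c)"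

lemma E_add: "E (a + b) = E a + E b"
  by (rule m2_eqI) (simp_all add: E_def emb_def single_add)
lemma E_mult: "E (a * b) = E a * E b"
  by (rule m2_eqI) (simp_all add: E_def emb_def mult_single)
lemma E_0[simp]: "E 0 = 0"
  by (rule m2_eqI) (simp_all add: E_def emb_def)
lemma E_1[simp]: "E 1 = 1"
  by (rule m2_eqI) (simp_all add: E_def emb_def)
lemma E_diff: "E (a - b) = E a - E b"
  by (rule m2_eqI) (simp_all add: E_def emb_def single_diff)
lemma E_sum: "E (sum g A) = (\<Sum>x\<in>A. E (g x))"
  by (induction A rule: infinite_finite_induct) (auto simp: E_add)
lemma E_comm: "E c * A = A * E c"
  by (rule m2_eqI) (simp_all add: E_def mult.commute)

definition evw :: "(var \<Rightarrow> 'd::comm_ring_1 R m2) \<Rightarrow> var list \<Rightarrow> 'd R m2" where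
  "evw \<phi> w = foldr (\<lambda>x acc. \<phi> x * acc) w 1"

lemma evw_Nil[simp]: "evw \<phi> [] = 1" by (simp add: evw_def)
lemma evw_Cons[simp]: "evw \<phi> (x # w) = \<phi> x * evw \<phi> w" by (simp add: evw_def)
lemma evw_append: "evw \<phi> (u @ v) = evw \<phi> u * evw \<phi> v"
  by (induction u) (auto simp: mult.assoc)

definition ev :: "(var \<Rightarrow> 'd::comm_ring_1 R m2) \<Rightarrow> (var list \<Rightarrow> 'd) \<Rightarrow> 'd R m2" where
  "ev \<phi> f = (\<Sum>w\<in>supp f. E (f w) * evw \<phi> w)"

lemma ev_sup: "finite A \<Longrightarrow> supp f \<subseteq> A \<Longrightarrow> ev \<phi> f = (\<Sum>w\<in>A. E (f w) * evw \<phi> w)"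
  unfolding ev_def by (rule sum.mono_neutral_left) (auto simp: supp_def)

lemma supp_padd: "supp (padd f g) \<subseteq> supp f \<union> supp g"
  by (auto simp: supp_def padd_def)
lemma supp_psub: "supp (psub f g) \<subseteq> supp f \<union> supp g"
  by (auto simp: supp_def psub_def)
lemma supp_psmul: "supp (psmul c f) \<subseteq> supp f"
  by (auto simp: supp_def psmul_def)

lemma ev_padd: "f \<in> FA \<Longrightarrow> g \<in> FA \<Longrightarrow> ev \<phi> (padd f g) = ev \<phi> f + ev \<phi> g"
proof -
  assume a: "f \<in> FA" "g \<in> FA"
  let ?A = "supp f \<union> supp g"
  have fin: "finite ?A" using a by (auto simp: FA_iff)
  show ?thesis
    using supp_padd[of f g]
    by (simp add: ev_sup[OF fin] padd_def E_add distrib_right sum.distrib)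
qed

lemma ev_psub: "f \<in> FA \<Longrightarrow> g \<in> FA \<Longrightarrow> ev \<phi> (psub f g) = ev \<phi> f - ev \<phi> g"
proof -
  assume a: "f \<in> FA" "g \<in> FA"
  let ?A = "supp f \<union> supp g"
  have fin: "finite ?A" using a by (auto simp: FA_iff)
  show ?thesis
    using supp_psub[of f g]
    by (simp add: ev_sup[OF fin] psub_def E_diff left_diff_distrib sum_subtractf)
qed

lemma ev_psmul: "f \<in> FA \<Longrightarrow> ev \<phi> (psmul c f) = E c * ev \<phi> f"
proof -
  assume a: "f \<in> FA"
  have fin: "finite (supp f)" using a by (auto simp: FA_iff)
  show ?thesis
    using supp_psmul[of c f]
    by (simp add: ev_sup[OF fin] psmul_def E_mult sum_distrib_left mult.assoc)
qed

lemma ev_pzero[simp]: "ev \<phi> pzero = 0"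
  by (simp add: ev_def supp_def pzero_def)

lemma ev_pmono[simp]: "ev \<phi> (pmono u) = evw \<phi> u"
proof -
  have "supp (pmono u :: var list \<Rightarrow> 'a) \<subseteq> {u}" by (auto simp: supp_def pmono_def)
  then show ?thesis by (subst ev_sup[of "{u}"]) (auto simp: pmono_def)
qed

lemma ev_fsum: "finite A \<Longrightarrow> (\<And>a. a \<in> A \<Longrightarrow> F a \<in> FA) \<Longrightarrow> ev \<phi> (fsum A F) = (\<Sum>a\<in>A. ev \<phi> (F a))"
proof (induction A rule: finite_induct)
  case empty
  then show ?case by simp
next
  case (insert a A)
  then show ?case by (simp add: fsum_insert ev_padd)
qed

lemma ev_pmul: "f \<in> FA \<Longrightarrow> g \<in> FA \<Longrightarrow> ev \<phi> (pmul f g) = ev \<phi> f * ev \<phi> g"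
proof -
  assume a: "f \<in> FA" "g \<in> FA"
  have fin: "finite (supp f)" "finite (supp g)" using a by (auto simp: FA_iff)
  have "ev \<phi> (pmul f g) = (\<Sum>u\<in>supp f. \<Sum>v\<in>supp g. E (f u * g v) * evw \<phi> (u @ v))"
    by (subst pmul_rep[OF a]) (simp add: ev_fsum fin ev_psmul)
  also have "\<dots> = (\<Sum>u\<in>supp f. \<Sum>v\<in>supp g. (E (f u) * evw \<phi> u) * (E (g v) * evw \<phi> v))"
    by (intro sum.cong refl) (simp add: E_mult evw_append mult.assoc E_comm[of "g _"] )
  also have "\<dots> = ev \<phi> f * ev \<phi> g"
    by (simp add: ev_def sum_product)
  finally show ?thesis .
qed

lemma ev_pone[simp]: "ev \<phi> pone = 1" by (simp add: pone_pmono)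
lemma ev_pvar[simp]: "ev \<phi> (pvar x) = \<phi> x" by (simp add: pvar_pmono)

lemma LieX_FA: "f \<in> LieX \<Longrightarrow> f \<in> FA"
  by (induction rule: LieX.induct) (auto simp: lie_def)




definition isdiag :: "'r::comm_ring_1 m2 \<Rightarrow> bool" where "isdiag A \<longleftrightarrow> e12 A = 0 \<and> e21 A = 0"
definition isoff :: "'r::comm_ring_1 m2 \<Rightarrow> bool" where "isoff A \<longleftrightarrow> e11 A = 0 \<and> e22 A = 0"
definition tr :: "'r::comm_ring_1 m2 \<Rightarrow> 'r" where "tr A = e11 A + e22 A"

definition Good :: "(var \<Rightarrow> 'd::comm_ring_1 R m2) \<Rightarrow> bool" where
  "Good \<phi> \<longleftrightarrow> (\<forall>i. isdiag (\<phi> (Y i)) \<and> tr (\<phi> (Y i)) = 0 \<and> isoff (\<phi> (Z i)))"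

lemma evw_par: "Good \<phi> \<Longrightarrow> (even (length (filter isZ w)) \<longrightarrow> isdiag (evw \<phi> w)) \<and>
   (odd (length (filter isZ w)) \<longrightarrow> isoff (evw \<phi> w))"
proof (induction w)
  case Nil
  then show ?case by (simp add: isdiag_def)
next
  case (Cons x w)
  then show ?case
    by (cases x) (auto simp: Good_def isdiag_def isoff_def isZ_def)
qed

lemma E_sel[simp]: "e11 (E c) = emb c" "e12 (E c) = 0" "e21 (E c) = 0" "e22 (E c) = emb c"
  by (simp_all add: E_def)

lemma ev_homog0: "Good \<phi> \<Longrightarrow> homog 0 f \<Longrightarrow> isdiag (ev \<phi> f)"
proof -
  assume g: "Good \<phi>" and h: "homog 0 f"
  have "\<And>w. w \<in> supp f \<Longrightarrow> isdiag (evw \<phi> w)"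
    using h evw_par[OF g] by (auto simp: homog_def supp_def zdeg_def)
  then show ?thesis unfolding ev_def isdiag_def m2_sum_sel by (auto simp: isdiag_def)
qed

lemma ev_homog1: "Good \<phi> \<Longrightarrow> homog 1 f \<Longrightarrow> isoff (ev \<phi> f)"
proof -
  assume g: "Good \<phi>" and h: "homog 1 f"
  have "\<And>w. w \<in> supp f \<Longrightarrow> isoff (evw \<phi> w)"
  proof -
    fix w assume "w \<in> supp f"
    then have "length (filter isZ w) mod 2 = 1" using h by (auto simp: homog_def supp_def zdeg_def)
    then have "odd (length (filter isZ w))" by presburger
    then show "isoff (evw \<phi> w)" using evw_par[OF g] by blast
  qed
  then show ?thesis unfolding ev_def isoff_def m2_sum_sel by (auto simp: isoff_def)
qed

lemma tr_add: "tr (A + B) = tr A + tr B" by (simp add: tr_def algebra_simps)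
lemma tr_smul: "tr (E c * A) = emb c * tr A" by (simp add: tr_def algebra_simps)
lemma tr_comm: "tr (A * B - B * A) = 0" for A :: "'r::comm_ring_1 m2" by (simp add: tr_def algebra_simps)

lemma LieX_tr: "f \<in> LieX \<Longrightarrow> Good \<phi> \<Longrightarrow> tr (ev \<phi> f) = 0"
proof (induction rule: LieX.induct)
  case (gen x)
  then show ?case by (cases x) (auto simp: Good_def isoff_def tr_def)
next
  case (add f g)
  then show ?case by (simp add: ev_padd LieX_FA tr_add)
next
  case (smul f c)
  then show ?case by (simp add: ev_psmul LieX_FA tr_smul)
next
  case (bracket f g)
  then show ?case by (simp add: lie_def ev_psub ev_pmul LieX_FA tr_comm)
qed

lemma adm_FA: "admissible \<sigma> \<Longrightarrow> \<sigma> x \<in> FA"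
  by (cases x) (auto simp: admissible_def LieX0_def LieX1_def intro: LieX_FA)

lemma Good_subst: assumes a: "admissible \<sigma>" "Good \<phi>" shows "Good (\<lambda>x. ev \<phi> (\<sigma> x))"
  unfolding Good_def
proof (intro allI conjI)
  fix i
  from a have "\<sigma> (Y i) \<in> LieX0" "\<sigma> (Z i) \<in> LieX1" by (auto simp: admissible_def)
  then show "isdiag (ev \<phi> (\<sigma> (Y i)))" "tr (ev \<phi> (\<sigma> (Y i))) = 0" "isoff (ev \<phi> (\<sigma> (Z i)))"
    using a ev_homog0 ev_homog1 LieX_tr by (auto simp: LieX0_def LieX1_def)
qed

lemma eval_word_ev: "admissible \<sigma> \<Longrightarrow> eval_word \<sigma> w \<in> FA \<and> ev \<phi> (eval_word \<sigma> w) = evw (\<lambda>x. ev \<phi> (\<sigma> x)) w"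
proof (induction w)
  case Nil
  then show ?case by (simp add: eval_word_def)
next
  case (Cons x w)
  have e: "eval_word \<sigma> (x # w) = pmul (\<sigma> x) (eval_word \<sigma> w)" by (simp add: eval_word_def)
  show ?case using Cons adm_FA[OF Cons.prems] unfolding e by (simp add: ev_pmul)
qed

lemma ev_psubst: "admissible \<sigma> \<Longrightarrow> f \<in> FA \<Longrightarrow> psubst \<sigma> f \<in> FA \<and> ev \<phi> (psubst \<sigma> f) = ev (\<lambda>x. ev \<phi> (\<sigma> x)) f"
proof -
  assume a: "admissible \<sigma>" "f \<in> FA"
  have fin: "finite (supp f)" using a by (simp add: FA_iff)
  have ps: "psubst \<sigma> f = fsum (supp f) (\<lambda>w. psmul (f w) (eval_word \<sigma> w))"
    by (rule psubst_gen[OF fin]) simp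
  have "ev \<phi> (fsum (supp f) (\<lambda>w. psmul (f w) (eval_word \<sigma> w))) =
     (\<Sum>w\<in>supp f. E (f w) * ev \<phi> (eval_word \<sigma> w))"
    using eval_word_ev[OF a(1)] fin by (simp add: ev_fsum ev_psmul)
  also have "\<dots> = ev (\<lambda>x. ev \<phi> (\<sigma> x)) f"
    using eval_word_ev[OF a(1)] by (simp add: ev_def)
  finally show ?thesis unfolding ps using eval_word_ev[OF a(1)] fin by simp
qed




definition Jm :: "(var list \<Rightarrow> 'd::comm_ring_1) set" where
  "Jm = {f \<in> FA. \<forall>\<phi>. Good \<phi> \<longrightarrow> ev \<phi> f = 0}"

lemma Jm_wg: "wg_ideal Jm"
  unfolding wg_ideal_def
proof (intro conjI ballI allI impI)
  show "Jm \<subseteq> FA" by (auto simp: Jm_def)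
  show "pzero \<in> Jm" by (auto simp: Jm_def)
  show "padd f g \<in> Jm" if "f \<in> Jm" "g \<in> Jm" for f g
    using that by (auto simp: Jm_def ev_padd)
  show "psmul c f \<in> Jm" if "f \<in> Jm" for c f
    using that by (auto simp: Jm_def ev_psmul)
  show "pmul f g \<in> Jm" if "f \<in> FA" "g \<in> Jm" for f g
    using that by (auto simp: Jm_def ev_pmul)
  show "pmul g f \<in> Jm" if "f \<in> FA" "g \<in> Jm" for f g
    using that by (auto simp: Jm_def ev_pmul)
  show "psubst \<sigma> f \<in> Jm" if "admissible \<sigma>" "f \<in> Jm" for \<sigma> f
    using that ev_psubst[OF that(1)] Good_subst[OF that(1)] by (auto simp: Jm_def)
qed

lemma diag_comm: "isdiag A \<Longrightarrow> isdiag B \<Longrightarrow> A * B = B * A" for A :: "'r::comm_ring_1 m2"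
  by (rule m2_eqI) (auto simp: isdiag_def mult.commute)
lemma off3: "isoff A \<Longrightarrow> isoff B \<Longrightarrow> isoff C \<Longrightarrow> A * B * C = C * B * A" for A :: "'r::comm_ring_1 m2"
  by (rule m2_eqI) (auto simp: isoff_def mult_ac)
lemma anti: "isdiag A \<Longrightarrow> tr A = 0 \<Longrightarrow> isoff B \<Longrightarrow> A * B + B * A = 0" for A :: "'r::comm_ring_1 m2"
proof -
  assume a: "isdiag A" "tr A = 0" "isoff B"
  then have "e22 A = - e11 A" by (simp add: tr_def eq_neg_iff_add_eq_0 add.commute)
  then show ?thesis using a by (intro m2_eqI) (auto simp: isdiag_def isoff_def algebra_simps)
qed

lemma gens_Jm: "gen1 \<in> Jm" "gen2 \<in> Jm" "gen3 \<in> Jm"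
proof -
  show "gen1 \<in> Jm"
    unfolding Jm_def gen1_def
    by (auto simp: ev_psub ev_pmul Good_def intro!: diag_comm)
  show "gen2 \<in> Jm"
    unfolding Jm_def gen2_def
    by (auto simp: ev_psub ev_pmul Good_def intro!: off3)
  show "gen3 \<in> Jm"
    unfolding Jm_def gen3_def
    by (auto simp: ev_padd ev_pmul Good_def intro!: anti)
qed

lemma wg_Inter:
  assumes ne: "Fam \<noteq> {}" and w: "\<And>J. J \<in> Fam \<Longrightarrow> wg_ideal J"
  shows "wg_ideal (\<Inter>Fam)"
  unfolding wg_ideal_def
proof (intro conjI ballI allI impI)
  show "\<Inter>Fam \<subseteq> FA"
  proof -
    obtain J where "J \<in> Fam" using ne by blast
    then have "\<Inter>Fam \<subseteq> J" "J \<subseteq> FA" using w[of J] by (auto simp: wg_ideal_def)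
    then show ?thesis by blast
  qed
  show "pzero \<in> \<Inter>Fam" using w by (auto simp: wg_ideal_def)
  show "padd f g \<in> \<Inter>Fam" if "f \<in> \<Inter>Fam" "g \<in> \<Inter>Fam" for f g
    using that w by (auto simp: wg_ideal_def)
  show "psmul c f \<in> \<Inter>Fam" if "f \<in> \<Inter>Fam" for c f
    using that w by (auto simp: wg_ideal_def)
  show "pmul f g \<in> \<Inter>Fam" if "f \<in> FA" "g \<in> \<Inter>Fam" for f g
    using that w by (auto simp: wg_ideal_def)
  show "pmul g f \<in> \<Inter>Fam" if "f \<in> FA" "g \<in> \<Inter>Fam" for f g
    using that w by (auto simp: wg_ideal_def)
  show "psubst \<sigma> f \<in> \<Inter>Fam" if "admissible \<sigma>" "f \<in> \<Inter>Fam" for \<sigma> f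
    using that w by (auto simp: wg_ideal_def)
qed

lemma Iid_props: "wg_ideal (Iid :: (var list \<Rightarrow> 'd::comm_ring_1) set) \<and> gen1 \<in> (Iid :: (var list \<Rightarrow> 'd) set)
   \<and> gen2 \<in> (Iid :: (var list \<Rightarrow> 'd) set) \<and> gen3 \<in> (Iid :: (var list \<Rightarrow> 'd) set) \<and> (Iid :: (var list \<Rightarrow> 'd) set) \<subseteq> Jm"
proof -
  define Fam where "Fam = {J :: (var list \<Rightarrow> 'd) set. wg_ideal J \<and> {gen1, gen2, gen3} \<subseteq> J}"
  have mem: "Jm \<in> Fam" using Jm_wg gens_Jm unfolding Fam_def by blast
  have W: "wg_ideal (\<Inter>Fam)"
  proof (rule wg_Inter)
    show "Fam \<noteq> {}" using mem by blast
    show "\<And>J. J \<in> Fam \<Longrightarrow> wg_ideal J" unfolding Fam_def by blast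
  qed
  have G: "gen1 \<in> \<Inter>Fam" "gen2 \<in> \<Inter>Fam" "gen3 \<in> \<Inter>Fam" unfolding Fam_def by blast+
  have sub: "\<Inter>Fam \<subseteq> Jm" using mem by (rule Inter_lower)
  have eq: "(Iid :: (var list \<Rightarrow> 'd) set) = \<Inter>Fam"
    unfolding Iid_gens wg_generated_def Fam_def by (rule refl)
  show ?thesis unfolding eq using W G sub by blast
qed




definition Xv :: "nat \<times> nat \<Rightarrow> 'd::comm_ring_1 R" where
  "Xv k = Poly_Mapping.single {#k#} 1"

definition Phi :: "var \<Rightarrow> 'd::comm_ring_1 R m2" where
  "Phi x = (case x of Y i \<Rightarrow> M (Xv (0, i)) 0 0 (- Xv (0, i)) | Z j \<Rightarrow> M 0 (Xv (1, j)) (Xv (2, j)) 0)"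

lemma Good_Phi: "Good Phi"
  by (simp add: Good_def Phi_def isdiag_def isoff_def tr_def)

definition mY :: "nat list \<Rightarrow> (nat \<times> nat) multiset" where
  "mY as = mset (map (Pair 0) as)"
definition Kb :: "nat list \<Rightarrow> (nat \<times> nat) multiset" where
  "Kb zs = mset (map (Pair 1) (evl zs)) + mset (map (Pair 2) (odl zs))"
definition Kc :: "nat list \<Rightarrow> (nat \<times> nat) multiset" where
  "Kc zs = mset (map (Pair 2) (evl zs)) + mset (map (Pair 1) (odl zs))"

lemma Kb_Cons: "Kb (x # xs) = {#(1, x)#} + Kc xs"
  by (simp add: Kb_def Kc_def add.commute)
lemma Kc_Cons: "Kc (x # xs) = {#(2, x)#} + Kb xs"
  by (simp add: Kb_def Kc_def add.commute)

abbreviation sg :: "(nat \<times> nat) multiset \<Rightarrow> 'd::comm_ring_1 R" where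
  "sg k \<equiv> Poly_Mapping.single k 1"

lemma evwY: "e11 (evw Phi (map Y as)) = (sg (mY as) :: 'd::comm_ring_1 R) \<and> e12 (evw Phi (map Y as)) = (0 :: 'd R)
   \<and> e21 (evw Phi (map Y as)) = (0 :: 'd R)"
proof (induction as)
  case Nil
  then show ?case by (simp add: mY_def)
next
  case (Cons a as)
  have "mY (a # as) = {#(0, a)#} + mY as" by (simp add: mY_def)
  then show ?case using Cons by (simp add: Phi_def Xv_def mult_single)
qed

lemma evwZ: "(even (length zs) \<longrightarrow> e11 (evw Phi (map Z zs)) = (sg (Kb zs) :: 'd::comm_ring_1 R) \<and> e12 (evw Phi (map Z zs)) = (0 :: 'd R)
      \<and> e21 (evw Phi (map Z zs)) = (0 :: 'd R) \<and> e22 (evw Phi (map Z zs)) = (sg (Kc zs) :: 'd R)) \<and>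
   (odd (length zs) \<longrightarrow> e11 (evw Phi (map Z zs)) = (0 :: 'd R) \<and> e12 (evw Phi (map Z zs)) = (sg (Kb zs) :: 'd R)
      \<and> e21 (evw Phi (map Z zs)) = (sg (Kc zs) :: 'd R) \<and> e22 (evw Phi (map Z zs)) = (0 :: 'd R))"
proof (induction zs)
  case Nil
  then show ?case by (simp add: Kb_def Kc_def)
next
  case (Cons x zs)
  then show ?case by (auto simp: Phi_def Xv_def mult_single Kb_Cons Kc_Cons)
qed

definition top :: "'r::comm_ring_1 m2 \<Rightarrow> 'r" where "top A = e11 A + e12 A"

lemma top_B: "top (evw Phi (map Y as @ map Z zs)) = (sg (mY as + Kb zs) :: 'd::comm_ring_1 R)"
proof -
  have "top (evw Phi (map Y as @ map Z zs)) = (sg (mY as) :: 'd R) * (e11 (evw Phi (map Z zs)) + e12 (evw Phi (map Z zs)))"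
  proof -
    have a: "e11 (evw Phi (map Y as)) = (sg (mY as) :: 'd R)" "e12 (evw Phi (map Y as)) = (0 :: 'd R)"
      using evwY[of as, where 'd='d] by auto
    show ?thesis by (simp add: evw_append top_def algebra_simps a)
  qed
  also have "\<dots> = (sg (mY as) :: 'd R) * sg (Kb zs)"
    using evwZ[of zs, where 'd='d] by (cases "even (length zs)") auto
  finally show ?thesis by (simp add: mult_single)
qed

definition proj :: "nat \<Rightarrow> (nat \<times> nat) multiset \<Rightarrow> nat multiset" where
  "proj k Ms = image_mset snd (filter_mset (\<lambda>p. fst p = k) Ms)"

lemma proj_plus: "proj k (A + B) = proj k A + proj k B" by (simp add: proj_def)
lemma proj_map: "proj k (image_mset (Pair j) N) = (if j = k then N else {#})"
  by (induction N) (auto simp: proj_def)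

lemma sorted_mset_eq: "sorted a \<Longrightarrow> sorted b \<Longrightarrow> mset a = mset b \<Longrightarrow> a = b"
  by (metis properties_for_sort)

lemma key_inj: "sorted as \<Longrightarrow> sorted as' \<Longrightarrow> sorted (evl zs) \<Longrightarrow> sorted (odl zs) \<Longrightarrow>
   sorted (evl zs') \<Longrightarrow> sorted (odl zs') \<Longrightarrow> mY as + Kb zs = mY as' + Kb zs' \<Longrightarrow> as = as' \<and> zs = zs'"
proof -
  assume s: "sorted as" "sorted as'" "sorted (evl zs)" "sorted (odl zs)" "sorted (evl zs')" "sorted (odl zs')"
    and e: "mY as + Kb zs = mY as' + Kb zs'"
  have p: "proj k (mY as + Kb zs) = proj k (mY as' + Kb zs')" for k using e by simp
  have "mset as = mset as'" using p[of 0] by (simp add: proj_plus proj_map mY_def Kb_def)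
  moreover have "mset (evl zs) = mset (evl zs')" using p[of 1] by (simp add: proj_plus proj_map mY_def Kb_def)
  moreover have "mset (odl zs) = mset (odl zs')" using p[of 2] by (simp add: proj_plus proj_map mY_def Kb_def)
  ultimately have "as = as'" "evl zs = evl zs'" "odl zs = odl zs'" using s sorted_mset_eq by blast+
  then show ?thesis by (metis il_evod)
qed

lemma Bmon_dec: "b \<in> Bmon \<Longrightarrow> \<exists>as zs. b = map Y as @ map Z zs \<and> sorted as \<and> sorted (evl zs) \<and> sorted (odl zs)"
proof -
  assume "b \<in> Bmon"
  then obtain as zs where b: "b = map Y as @ map Z zs" "sorted as"
     "sorted (nths zs {i. even i})" "sorted (nths zs {i. odd i})" unfolding Bmon_def by blast
  have "nths zs {i. even i} = evl zs \<and> nths zs {i. odd i} = odl zs"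
    using nths_il[of "odl zs" "evl zs"] len_evod[of zs] by (simp add: il_evod)
  then show ?thesis using b by auto
qed

definition keyB :: "var list \<Rightarrow> (nat \<times> nat) multiset" where
  "keyB b = (SOME k. \<exists>as zs. b = map Y as @ map Z zs \<and> sorted as \<and> sorted (evl zs) \<and> sorted (odl zs)
      \<and> k = mY as + Kb zs)"

lemma keyB: "b \<in> Bmon \<Longrightarrow> \<exists>as zs. b = map Y as @ map Z zs \<and> sorted as \<and> sorted (evl zs) \<and> sorted (odl zs)
      \<and> keyB b = mY as + Kb zs"
proof -
  assume "b \<in> Bmon"
  then have "\<exists>k as zs. b = map Y as @ map Z zs \<and> sorted as \<and> sorted (evl zs) \<and> sorted (odl zs)
      \<and> k = mY as + Kb zs" using Bmon_dec by blast
  then show ?thesis unfolding keyB_def by (rule someI_ex[where P = "\<lambda>k. \<exists>as zs. _ as zs k", OF exE]) blast+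
qed

lemma top_keyB: "b \<in> Bmon \<Longrightarrow> top (evw Phi b) = (sg (keyB b) :: 'd::comm_ring_1 R)"
  using keyB top_B by metis

lemma keyB_inj: "b \<in> Bmon \<Longrightarrow> b' \<in> Bmon \<Longrightarrow> keyB b = keyB b' \<Longrightarrow> b = b'"
  using keyB key_inj by metis

lemma top_sum: "top (sum F S) = (\<Sum>x\<in>S. top (F x))"
  by (simp add: top_def m2_sum_sel sum.distrib)

lemma top_E: "top (E c * A) = emb c * top A"
  by (simp add: top_def algebra_simps)

lemma indep:
  fixes c :: "var list \<Rightarrow> 'd::comm_ring_1"
  assumes S: "finite S" "S \<subseteq> Bmon" and J: "(\<lambda>w. \<Sum>b\<in>S. c b * pmono b w) \<in> Jm"
  shows "\<forall>b\<in>S. c b = 0"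
proof
  fix b0 assume b0: "b0 \<in> S"
  have f: "(\<lambda>w. \<Sum>b\<in>S. c b * pmono b w) = fsum S (\<lambda>b. psmul (c b) (pmono b))"
    by (simp add: fsum_def psmul_def)
  have "ev Phi (fsum S (\<lambda>b. psmul (c b) (pmono b))) = 0"
    using J Good_Phi unfolding f Jm_def by auto
  then have "(\<Sum>b\<in>S. E (c b) * evw Phi b) = 0"
    using S by (simp add: ev_fsum ev_psmul)
  then have "top (\<Sum>b\<in>S. E (c b) * evw Phi b) = 0" by (simp add: top_def)
  then have z: "(\<Sum>b\<in>S. Poly_Mapping.single (keyB b) (c b)) = 0"
    using S by (simp add: top_sum top_E top_keyB subset_iff emb_def mult_single)
  have "0 = Poly_Mapping.lookup (\<Sum>b\<in>S. Poly_Mapping.single (keyB b) (c b)) (keyB b0)"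
    using z by simp
  also have "\<dots> = (\<Sum>b\<in>S. if b = b0 then c b else 0)"
    unfolding lookup_sum lookup_single
    using keyB_inj S b0 by (intro sum.cong refl) (auto simp: when_def)
  also have "\<dots> = c b0" using S b0 by simp
  finally show "c b0 = 0" by simp
qed

theorem mainTheorem4:
  assumes "infinite (UNIV :: 'd::idom set)"
  shows "(\<forall>f \<in> (FA :: (var list \<Rightarrow> 'd) set). \<exists>S c. finite S \<and> S \<subseteq> Bmon \<and>
            psub f (\<lambda>w. \<Sum>b\<in>S. c b * pmono b w) \<in> Iid)
       \<and> (\<forall>S (c :: var list \<Rightarrow> 'd). finite S \<and> S \<subseteq> Bmon \<and>
            (\<lambda>w. \<Sum>b\<in>S. c b * pmono b w) \<in> Iid \<longrightarrow> (\<forall>b\<in>S. c b = 0))"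
proof -
  have P: "wg_ideal (Iid :: (var list \<Rightarrow> 'd) set) \<and> gen1 \<in> (Iid :: (var list \<Rightarrow> 'd) set)
   \<and> gen2 \<in> (Iid :: (var list \<Rightarrow> 'd) set) \<and> gen3 \<in> (Iid :: (var list \<Rightarrow> 'd) set) \<and> (Iid :: (var list \<Rightarrow> 'd) set) \<subseteq> Jm"
    by (rule Iid_props)
  interpret I: wgJ "Iid :: (var list \<Rightarrow> 'd) set"
    using P by unfold_locales auto
  show ?thesis
  proof (intro conjI)
    show "\<forall>f \<in> (FA :: (var list \<Rightarrow> 'd) set). \<exists>S c. finite S \<and> S \<subseteq> Bmon \<and>
            psub f (\<lambda>w. \<Sum>b\<in>S. c b * pmono b w) \<in> Iid"
      using I.span by blast
    show "\<forall>S (c :: var list \<Rightarrow> 'd). finite S \<and> S \<subseteq> Bmon \<and>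
            (\<lambda>w. \<Sum>b\<in>S. c b * pmono b w) \<in> Iid \<longrightarrow> (\<forall>b\<in>S. c b = 0)"
      using P indep by blast
  qed
qed


end
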